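(* Let $G$ be a connected cubic graph of order at least $6$. Then $\alpha(G)\geq \frac{3}{5}\,\mathrm{diss}(G)$.
   Context: All graphs are finite, simple and undirected. $\alpha(G)$ denotes the independence number of $G$. A set $D$ of vertices of $G$ is a dissociation set if the subgraph $G[D]$ induced by $D$ has maximum degree at most $1$; the dissociation number $\mathrm{diss}(G)$ is the maximum order of a dissociation set in $G$. *)

theory Defs
  imports Complex_Main
begin

definition simple_graph :: "'a set \<Rightarrow> ('a \<Rightarrow> 'a \<Rightarrow> bool) \<Rightarrow> bool" where
  "simple_graph V E \<longleftrightarrow> finite V \<and> (\<forall>u v. E u v \<longrightarrow> u \<in> V \<and> v \<in> V) \<and>
     (\<forall>u v. E u v \<longrightarrow> E v u) \<and> (\<forall>v. \<not> E v v)"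

definition neighbors :: "'a set \<Rightarrow> ('a \<Rightarrow> 'a \<Rightarrow> bool) \<Rightarrow> 'a \<Rightarrow> 'a set" where
  "neighbors V E v = {u \<in> V. E v u}"

definition degree :: "'a set \<Rightarrow> ('a \<Rightarrow> 'a \<Rightarrow> bool) \<Rightarrow> 'a \<Rightarrow> nat" where
  "degree V E v = card (neighbors V E v)"

definition cubic :: "'a set \<Rightarrow> ('a \<Rightarrow> 'a \<Rightarrow> bool) \<Rightarrow> bool" where
  "cubic V E \<longleftrightarrow> (\<forall>v\<in>V. degree V E v = 3)"

definition connected_graph :: "'a set \<Rightarrow> ('a \<Rightarrow> 'a \<Rightarrow> bool) \<Rightarrow> bool" where
  "connected_graph V E \<longleftrightarrow> (\<forall>u\<in>V. \<forall>v\<in>V. (\<lambda>x y. E x y \<and> x \<in> V \<and> y \<in> V)\<^sup>*\<^sup>* u v)"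

definition independent_set :: "'a set \<Rightarrow> ('a \<Rightarrow> 'a \<Rightarrow> bool) \<Rightarrow> 'a set \<Rightarrow> bool" where
  "independent_set V E S \<longleftrightarrow> S \<subseteq> V \<and> (\<forall>u\<in>S. \<forall>v\<in>S. \<not> E u v)"

definition dissociation_set :: "'a set \<Rightarrow> ('a \<Rightarrow> 'a \<Rightarrow> bool) \<Rightarrow> 'a set \<Rightarrow> bool" where
  "dissociation_set V E D \<longleftrightarrow> D \<subseteq> V \<and> (\<forall>v\<in>D. card {u \<in> D. E v u} \<le> 1)"

definition independence_number :: "'a set \<Rightarrow> ('a \<Rightarrow> 'a \<Rightarrow> bool) \<Rightarrow> nat" where
  "independence_number V E = Max (card ` {S. independent_set V E S})"

definition dissociation_number :: "'a set \<Rightarrow> ('a \<Rightarrow> 'a \<Rightarrow> bool) \<Rightarrow> nat" where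
  "dissociation_number V E = Max (card ` {D. dissociation_set V E D})"

end

theory Submission
  imports Defs
begin

lemma dc:
  assumes "finite A" "finite B" "\<forall>x y. E x y \<longrightarrow> E y x"
  shows "(\<Sum>x\<in>A. card {y\<in>B. E x y}) = (\<Sum>y\<in>B. card {x\<in>A. E y x})"
proof -
  have "(\<Sum>x\<in>A. card {y\<in>B. E x y}) = (\<Sum>x\<in>A. \<Sum>y\<in>B. if E x y then 1 else 0)"
    using assms by (simp add: sum.inter_filter[symmetric])
  also have "\<dots> = (\<Sum>y\<in>B. \<Sum>x\<in>A. if E x y then 1 else 0)" by (rule sum.swap)
  also have "\<dots> = (\<Sum>y\<in>B. \<Sum>x\<in>A. if E y x then 1 else 0)"
    using assms(3) by (intro sum.cong refl) auto
  also have "\<dots> = (\<Sum>y\<in>B. card {x\<in>A. E y x})"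
    using assms by (simp add: sum.inter_filter[symmetric])
  finally show ?thesis .
qed

lemma list_col:
  assumes "finite U" "\<forall>x y. E x y \<longrightarrow> E y x" "\<forall>x. \<not> E x x" "\<forall>x. finite (L x)"
    "\<forall>x\<in>U. card {y\<in>U. E x y} \<le> card (L x)"
    "\<forall>K\<subseteq>U. K \<noteq> {} \<longrightarrow> (\<forall>x\<in>K. \<forall>y\<in>U. E x y \<longrightarrow> y \<in> K) \<longrightarrow> (\<exists>x\<in>K. card {y\<in>U. E x y} < card (L x))"
  shows "\<exists>c::'a\<Rightarrow>'b. (\<forall>x\<in>U. c x \<in> L x) \<and> (\<forall>x\<in>U. \<forall>y\<in>U. E x y \<longrightarrow> c x \<noteq> c y)"
  using assms
proof (induction "card U" arbitrary: U rule: less_induct)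
  case less
  show ?case
  proof (cases "U = {}")
    case True then show ?thesis by auto
  next
    case False
    have "\<exists>x\<in>U. card {y\<in>U. E x y} < card (L x)"
      using less.prems(6)[rule_format, of U] False by auto
    then obtain x where x: "x \<in> U" "card {y\<in>U. E x y} < card (L x)"
      by blast
    define U' where "U' = U - {x}"
    have fU': "finite U'" using less.prems(1) U'_def by auto
    have cU': "card U' < card U" using x(1) less.prems(1) U'_def by (meson card_Diff1_less)
    have sub: "\<And>z. {y\<in>U'. E z y} \<subseteq> {y\<in>U. E z y}" using U'_def by auto
    have h5: "\<forall>z\<in>U'. card {y\<in>U'. E z y} \<le> card (L z)"
    proof
      fix z assume "z \<in> U'"
      then have "card {y\<in>U'. E z y} \<le> card {y\<in>U. E z y}"
        using sub less.prems(1) by (intro card_mono) auto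
      moreover have "card {y\<in>U. E z y} \<le> card (L z)" using less.prems(5) \<open>z \<in> U'\<close> U'_def by blast
      ultimately show "card {y\<in>U'. E z y} \<le> card (L z)" by (rule le_trans)
    qed
    have h6: "\<forall>K\<subseteq>U'. K \<noteq> {} \<longrightarrow> (\<forall>z\<in>K. \<forall>y\<in>U'. E z y \<longrightarrow> y \<in> K) \<longrightarrow> (\<exists>z\<in>K. card {y\<in>U'. E z y} < card (L z))"
    proof (intro allI impI)
      fix K assume K: "K \<subseteq> U'" "K \<noteq> {}" "\<forall>z\<in>K. \<forall>y\<in>U'. E z y \<longrightarrow> y \<in> K"
      show "\<exists>z\<in>K. card {y\<in>U'. E z y} < card (L z)"
      proof (cases "\<forall>z\<in>K. \<forall>y\<in>U. E z y \<longrightarrow> y \<in> K")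
        case True
        have "K \<subseteq> U" using K(1) U'_def by auto
        have "\<exists>z\<in>K. card {y\<in>U. E z y} < card (L z)"
          by (rule mp[OF mp[OF mp[OF spec[OF less.prems(6), of K] \<open>K \<subseteq> U\<close>] K(2)] True])
        then obtain z where z: "z \<in> K" "card {y\<in>U. E z y} < card (L z)"
          by blast
        have "card {y\<in>U'. E z y} \<le> card {y\<in>U. E z y}"
          using sub less.prems(1) by (intro card_mono) auto
        then show ?thesis using z by (meson le_less_trans)
      next
        case False
        then obtain z y where zy: "z \<in> K" "y \<in> U" "E z y" "y \<notin> K" by blast
        then have "y = x" using K U'_def by blast
        have "{y\<in>U'. E z y} \<subset> {y\<in>U. E z y}" using sub zy \<open>y = x\<close> U'_def by auto
        then have "card {y\<in>U'. E z y} < card {y\<in>U. E z y}"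
          using less.prems(1) by (intro psubset_card_mono) auto
        moreover have "z \<in> U" using zy K U'_def by auto
        moreover have "card {y\<in>U. E z y} \<le> card (L z)" using less.prems(5) \<open>z \<in> U\<close> by blast
        ultimately show ?thesis using zy(1) by (meson less_le_trans)
      qed
    qed
    obtain c :: "'a \<Rightarrow> 'b" where c: "\<forall>z\<in>U'. c z \<in> L z" "\<forall>z\<in>U'. \<forall>y\<in>U'. E z y \<longrightarrow> c z \<noteq> c y"
      using less.hyps[OF cU' fU' less.prems(2,3,4) h5 h6] by blast
    have "card (c ` {y\<in>U'. E x y}) \<le> card {y\<in>U'. E x y}" using fU' by (intro card_image_le) auto
    also have "\<dots> \<le> card {y\<in>U. E x y}" using sub less.prems(1) by (intro card_mono) auto
    finally have "card (c ` {y\<in>U'. E x y}) < card (L x)" using x(2) by linarith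
    moreover have "finite (c ` {y\<in>U'. E x y})" using fU' by auto
    ultimately have "\<not> L x \<subseteq> c ` {y\<in>U'. E x y}"
      using card_mono not_le by blast
    then obtain col where col: "col \<in> L x" "col \<notin> c ` {y\<in>U'. E x y}" by blast
    define c' where "c' = c(x := col)"
    have "\<forall>z\<in>U. c' z \<in> L z" using c col c'_def U'_def by auto
    moreover have "\<forall>z\<in>U. \<forall>y\<in>U. E z y \<longrightarrow> c' z \<noteq> c' y"
    proof (intro ballI impI)
      fix z y assume zy: "z \<in> U" "y \<in> U" "E z y"
      show "c' z \<noteq> c' y"
      proof (cases "z = x")
        case True
        then have "y \<noteq> x" using zy less.prems(3) by auto
        then show ?thesis using True col zy c'_def U'_def by auto
      next
        case False
        show ?thesis
        proof (cases "y = x")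
          case True
          then have "E x z" using zy less.prems(2) by auto
          then show ?thesis using True False col zy c'_def U'_def by auto
        next
          case False
          then show ?thesis using \<open>z \<noteq> x\<close> c zy c'_def U'_def by auto
        qed
      qed
    qed
    ultimately show ?thesis by blast
  qed
qed



locale cg =
  fixes V :: "'a set" and E :: "'a \<Rightarrow> 'a \<Rightarrow> bool"
  assumes sg: "simple_graph V E" and con: "connected_graph V E" and cub: "cubic V E"
begin

lemma fin: "finite V" using sg unfolding simple_graph_def by auto
lemma inV: "E x y \<Longrightarrow> x \<in> V \<and> y \<in> V" using sg unfolding simple_graph_def by auto
lemma sym: "\<forall>x y. E x y \<longrightarrow> E y x" using sg unfolding simple_graph_def by auto
lemma irr: "\<forall>x. \<not> E x x" using sg unfolding simple_graph_def by auto
lemma deg3: "v \<in> V \<Longrightarrow> card {u\<in>V. E v u} = 3"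
  using cub unfolding cubic_def degree_def neighbors_def by auto

lemma closed_all:
  assumes "K \<subseteq> V" "K \<noteq> {}" "\<forall>x\<in>K. \<forall>y. E x y \<longrightarrow> y \<in> K"
  shows "K = V"
proof
  show "K \<subseteq> V" by fact
  show "V \<subseteq> K"
  proof
    fix v assume v: "v \<in> V"
    obtain x0 where x0: "x0 \<in> K" using assms(2) by blast
    then have "x0 \<in> V" using assms(1) by auto
    then have "(\<lambda>x y. E x y \<and> x \<in> V \<and> y \<in> V)\<^sup>*\<^sup>* x0 v"
      using con v unfolding connected_graph_def by blast
    then show "v \<in> K"
    proof (induction rule: rtranclp_induct)
      case base then show ?case using x0 .
    next
      case (step y z) then show ?case using assms(3) by blast
    qed
  qed
qed

lemma nbfin: "finite {y\<in>V. E x y}" using fin by auto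

lemma side_col:
  assumes A: "A \<subseteq> V" "A \<noteq> {}" "A \<noteq> V"
  shows "\<exists>c::'a\<Rightarrow>nat. (\<forall>x\<in>A. c x \<in> {0,1,2}) \<and> (\<forall>x\<in>A. \<forall>y\<in>A. E x y \<longrightarrow> c x \<noteq> c y)"
proof (rule list_col)
  show "finite A" using A fin finite_subset by auto
  show "\<forall>x y. E x y \<longrightarrow> E y x" using sym .
  show "\<forall>x. \<not> E x x" using irr .
  show "\<forall>x. finite ({0,1,2::nat})" by auto
  have c3: "card {0,1,2::nat} = 3" by simp
  show "\<forall>x\<in>A. card {y\<in>A. E x y} \<le> card {0,1,2::nat}"
  proof
    fix x assume "x \<in> A"
    then have "card {y\<in>A. E x y} \<le> card {y\<in>V. E x y}"
      using A nbfin by (intro card_mono) auto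
    then show "card {y\<in>A. E x y} \<le> card {0,1,2::nat}" using deg3 \<open>x \<in> A\<close> A c3 by auto
  qed
  show "\<forall>K\<subseteq>A. K \<noteq> {} \<longrightarrow> (\<forall>x\<in>K. \<forall>y\<in>A. E x y \<longrightarrow> y \<in> K) \<longrightarrow> (\<exists>x\<in>K. card {y\<in>A. E x y} < card {0,1,2::nat})"
  proof (intro allI impI)
    fix K assume K: "K \<subseteq> A" "K \<noteq> {}" "\<forall>x\<in>K. \<forall>y\<in>A. E x y \<longrightarrow> y \<in> K"
    show "\<exists>x\<in>K. card {y\<in>A. E x y} < card {0,1,2::nat}"
    proof (rule ccontr)
      assume "\<not> (\<exists>x\<in>K. card {y\<in>A. E x y} < card {0,1,2::nat})"
      then have ge: "\<forall>x\<in>K. card {y\<in>A. E x y} \<ge> 3" using c3 by auto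
      have "\<forall>x\<in>K. \<forall>y. E x y \<longrightarrow> y \<in> K"
      proof (intro ballI allI impI)
        fix x y assume xy: "x \<in> K" "E x y"
        have sub: "{y\<in>A. E x y} \<subseteq> {y\<in>V. E x y}" using A by auto
        have "card {y\<in>A. E x y} = card {y\<in>V. E x y}"
          using ge xy(1) deg3[of x] K A sub nbfin card_mono[OF nbfin sub] by force
        then have "{y\<in>A. E x y} = {y\<in>V. E x y}" using card_subset_eq[OF nbfin sub] by auto
        moreover have "y \<in> {y\<in>V. E x y}" using xy inV by auto
        ultimately have "y \<in> A" by auto
        then show "y \<in> K" using K(3) xy by blast
      qed
      moreover have "K \<subseteq> V" using K A by auto
      ultimately have "K = V" using closed_all K(2) by blast
      then show False using K A by auto
    qed
  qed
qed

definition cut :: "'a set \<Rightarrow> ('a \<times> 'a) set" where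
  "cut A = {(x,y). x \<in> A \<and> y \<in> V \<and> y \<notin> A \<and> E x y}"

lemma cut_fin: "finite (cut A)"
proof -
  have "cut A \<subseteq> V \<times> V" unfolding cut_def using inV by auto
  then show ?thesis using fin finite_subset by blast
qed

lemma two_cut:
  assumes A: "A \<subseteq> V" "A \<noteq> {}" "A \<noteq> V" and c: "card (cut A) \<le> 2"
  shows "\<exists>c::'a\<Rightarrow>nat. (\<forall>x\<in>V. c x < 3) \<and> (\<forall>x\<in>V. \<forall>y\<in>V. E x y \<longrightarrow> c x \<noteq> c y)"
proof -
  obtain c1 :: "'a \<Rightarrow> nat" where c1: "\<forall>x\<in>A. c1 x \<in> {0,1,2}" "\<forall>x\<in>A. \<forall>y\<in>A. E x y \<longrightarrow> c1 x \<noteq> c1 y"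
    using side_col[OF A] by blast
  have B: "V - A \<subseteq> V" "V - A \<noteq> {}" "V - A \<noteq> V" using A by auto
  obtain c2 :: "'a \<Rightarrow> nat" where c2: "\<forall>x\<in>V-A. c2 x \<in> {0,1,2}" "\<forall>x\<in>V-A. \<forall>y\<in>V-A. E x y \<longrightarrow> c2 x \<noteq> c2 y"
    using side_col[OF B] by blast
  define F where "F = (\<lambda>(x,y). (c1 x + 3 - c2 y) mod 3) ` cut A"
  have "card F \<le> card (cut A)" unfolding F_def using cut_fin by (rule card_image_le)
  then have "card F < card {0,1,2::nat}" using c by simp
  then have "\<not> {0,1,2::nat} \<subseteq> F"
    using card_mono[of F "{0,1,2::nat}"] F_def cut_fin by (meson finite_imageI not_le)
  then obtain k where k: "k \<in> {0,1,2::nat}" "k \<notin> F" by blast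
  define c where "c = (\<lambda>x. if x \<in> A then c1 x else (c2 x + k) mod 3)"
  have "\<forall>x\<in>V. c x < 3" using c1 c2 unfolding c_def by auto
  moreover have "\<forall>x\<in>V. \<forall>y\<in>V. E x y \<longrightarrow> c x \<noteq> c y"
  proof (intro ballI impI)
    fix x y assume xy: "x \<in> V" "y \<in> V" "E x y"
    have key: "\<And>a b. a \<in> A \<Longrightarrow> b \<in> V \<Longrightarrow> b \<notin> A \<Longrightarrow> E a b \<Longrightarrow> c1 a \<noteq> (c2 b + k) mod 3"
    proof
      fix a b assume ab: "a \<in> A" "b \<in> V" "b \<notin> A" "E a b" "c1 a = (c2 b + k) mod 3"
      have "(a,b) \<in> cut A" using ab unfolding cut_def by auto
      then have "(c1 a + 3 - c2 b) mod 3 \<in> F" unfolding F_def by force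
      moreover have "(c1 a + 3 - c2 b) mod 3 = k"
      proof -
        have h1: "c2 b = 0 \<or> c2 b = 1 \<or> c2 b = 2" using c2(1) ab by auto
        have h2: "k = 0 \<or> k = 1 \<or> k = 2" using k by auto
        from h1 h2 show ?thesis using ab(5) by (elim disjE) auto
      qed
      ultimately show False using k by auto
    qed
    show "c x \<noteq> c y"
    proof (cases "x \<in> A")
      case True
      show ?thesis
      proof (cases "y \<in> A")
        case True then show ?thesis using \<open>x \<in> A\<close> c1 xy unfolding c_def by auto
      next
        case False then show ?thesis using \<open>x \<in> A\<close> key xy unfolding c_def by auto
      qed
    next
      case False
      show ?thesis
      proof (cases "y \<in> A")
        case True
        have "E y x" using xy sym by blast
        then have "c1 y \<noteq> (c2 x + k) mod 3" using key True xy \<open>x \<notin> A\<close> by blast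
        then show ?thesis using \<open>x \<notin> A\<close> True unfolding c_def by auto
      next
        case False
        have "c2 x \<noteq> c2 y" using c2 xy \<open>x \<notin> A\<close> False by auto
        have xa: "x \<in> V - A" "y \<in> V - A" using xy \<open>x \<notin> A\<close> False by auto
        have "c2 x \<in> {0,1,2}" using c2(1) xa(1) by blast
        then have h1: "c2 x = 0 \<or> c2 x = 1 \<or> c2 x = 2" by simp
        have "c2 y \<in> {0,1,2}" using c2(1) xa(2) by blast
        then have h2: "c2 y = 0 \<or> c2 y = 1 \<or> c2 y = 2" by simp
        have h3: "k = 0 \<or> k = 1 \<or> k = 2" using k by auto
        from h1 h2 h3 \<open>c2 x \<noteq> c2 y\<close> have "(c2 x + k) mod 3 \<noteq> (c2 y + k) mod 3"
          by (elim disjE) simp_all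
        then show ?thesis using \<open>x \<notin> A\<close> False unfolding c_def by auto
      qed
    qed
  qed
  ultimately show ?thesis by blast
qed

end


context cg begin

lemma nb_eq:
  assumes "x \<in> V" "T \<subseteq> {y\<in>V. E x y}" "3 \<le> card T"
  shows "{y\<in>V. E x y} = T"
proof -
  have "finite T" using assms(2) nbfin finite_subset by blast
  have "card T \<le> card {y\<in>V. E x y}" by (rule card_mono[OF nbfin assms(2)])
  then have "card T = card {y\<in>V. E x y}" using deg3[OF assms(1)] assms(3) by linarith
  then show ?thesis using card_subset_eq[OF nbfin assms(2)] by auto
qed

lemma exists_P3:
  assumes "6 \<le> card V"
  shows "\<exists>v u w. v \<in> V \<and> E v u \<and> E v w \<and> u \<noteq> w \<and> \<not> E u w"
proof (rule ccontr)
  assume H: "\<not> ?thesis"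
  have "V \<noteq> {}" using assms by auto
  then obtain v where v: "v \<in> V" by blast
  obtain a b c where abc: "{y\<in>V. E v y} = {a,b,c}" "a \<noteq> b" "b \<noteq> c" "a \<noteq> c"
    using deg3[OF v] card_3_iff by metis
  have e: "E v a" "E v b" "E v c" using abc(1) by auto
  have ab: "E a b" using H v e abc by blast
  have ac: "E a c" using H v e abc by blast
  have bc: "E b c" using H v e abc by blast
  have s: "\<And>x y. E x y \<Longrightarrow> E y x" using sym by blast
  have va: "v \<noteq> a" "v \<noteq> b" "v \<noteq> c" using e irr by auto
  define K where "K = {v,a,b,c}"
  have KV: "K \<subseteq> V" using K_def v e inV by auto
  have cl: "\<forall>x\<in>K. \<forall>y. E x y \<longrightarrow> y \<in> K"
  proof (intro ballI allI impI)
    fix x y assume x: "x \<in> K" and xy: "E x y"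
    have yV: "y \<in> V" using xy inV by auto
    show "y \<in> K"
    proof -
      have "x = v \<or> x = a \<or> x = b \<or> x = c" using x K_def by auto
      moreover have "x = a \<Longrightarrow> {y\<in>V. E x y} = {v,b,c}"
        using nb_eq[of a "{v,b,c}"] s e ab ac inV va abc by (auto simp: card_insert_if)
      moreover have "x = b \<Longrightarrow> {y\<in>V. E x y} = {v,a,c}"
        using nb_eq[of b "{v,a,c}"] s e ab bc inV va abc by (auto simp: card_insert_if)
      moreover have "x = c \<Longrightarrow> {y\<in>V. E x y} = {v,a,b}"
        using nb_eq[of c "{v,a,b}"] s e bc ac inV va abc by (auto simp: card_insert_if)
      ultimately have "y \<in> {y\<in>V. E x y} \<Longrightarrow> y \<in> K" using abc(1) K_def by auto
      then show ?thesis using yV xy by auto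
    qed
  qed
  have "K = V" using closed_all[OF KV] cl K_def by blast
  moreover have "card K \<le> 4" unfolding K_def by (auto simp: card_insert_if)
  ultimately show False using assms by auto
qed

end


context cg begin

lemma cut_contra:
  assumes uw: "u \<noteq> w" "\<not> E u w" "u \<in> V" "w \<in> V"
    and v: "v \<in> V" "E v u" "E v w"
    and K: "K \<subseteq> V - {u,w}" "K \<noteq> {}" "\<forall>x\<in>K. \<forall>y\<in>V - {u,w}. E x y \<longrightarrow> y \<in> K"
    and nocom: "\<not> (\<exists>z\<in>K. E z u \<and> E z w)"
    and nc: "\<forall>A. A \<subseteq> V \<longrightarrow> A \<noteq> {} \<longrightarrow> A \<noteq> V \<longrightarrow> 3 \<le> card (cut A)"
  shows False
proof -
  have s: "\<And>x y. E x y \<Longrightarrow> E y x" using sym by blast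
  have nwu: "\<not> E w u" using uw s by blast
  have vK: "v \<notin> K" using nocom v s by blast
  have vuw: "v \<noteq> u" "v \<noteq> w" using v irr by auto
  have KV: "K \<subseteq> V" "u \<notin> K" "w \<notin> K" using K by auto
  have finK: "finite K" using KV fin finite_subset by blast
  define Pu where "Pu = {x\<in>K. E x u}"
  define Pw where "Pw = {x\<in>K. E x w}"
  define Qu where "Qu = {y\<in>V. E u y} - K"
  define Qw where "Qw = {y\<in>V. E w y} - K"
  have fins: "finite Pu" "finite Pw" "finite Qu" "finite Qw"
    unfolding Pu_def Pw_def Qu_def Qw_def using finK nbfin by auto
  have su: "card Pu + card Qu = 3"
  proof -
    have "{y\<in>V. E u y} = Pu \<union> Qu" unfolding Pu_def Qu_def using KV s by auto
    moreover have "Pu \<inter> Qu = {}" unfolding Pu_def Qu_def by auto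
    ultimately have "card {y\<in>V. E u y} = card Pu + card Qu" using fins card_Un_disjoint by metis
    then show ?thesis using deg3[OF uw(3)] by simp
  qed
  have sw: "card Pw + card Qw = 3"
  proof -
    have "{y\<in>V. E w y} = Pw \<union> Qw" unfolding Pw_def Qw_def using KV s by auto
    moreover have "Pw \<inter> Qw = {}" unfolding Pw_def Qw_def by auto
    ultimately have "card {y\<in>V. E w y} = card Pw + card Qw" using fins card_Un_disjoint by metis
    then show ?thesis using deg3[OF uw(4)] by simp
  qed
  have cl: "\<And>x y. x \<in> K \<Longrightarrow> E x y \<Longrightarrow> y \<in> K \<or> y = u \<or> y = w"
  proof -
    fix x y assume "x \<in> K" "E x y"
    then have "y \<in> V" using inV by auto
    then show "y \<in> K \<or> y = u \<or> y = w" using K(3) \<open>x \<in> K\<close> \<open>E x y\<close> by blast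
  qed
  have iu: "inj_on (\<lambda>x. (x,u)) A" "inj_on (\<lambda>x. (x,w)) A" "inj_on (\<lambda>y. (u,y)) A" "inj_on (\<lambda>y. (w,y)) A" for A
    by (auto intro: inj_onI)
  have c1: "card (cut K) = card Pu + card Pw"
  proof -
    have "cut K = (\<lambda>x. (x,u)) ` Pu \<union> (\<lambda>x. (x,w)) ` Pw"
    proof
      show "cut K \<subseteq> (\<lambda>x. (x,u)) ` Pu \<union> (\<lambda>x. (x,w)) ` Pw"
      proof
        fix p assume "p \<in> cut K"
        then obtain x y where p: "p = (x,y)" "x \<in> K" "y \<in> V" "y \<notin> K" "E x y" unfolding cut_def by blast
        then have "y = u \<or> y = w" using cl by blast
        then show "p \<in> (\<lambda>x. (x,u)) ` Pu \<union> (\<lambda>x. (x,w)) ` Pw" using p unfolding Pu_def Pw_def by auto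
      qed
      show "(\<lambda>x. (x,u)) ` Pu \<union> (\<lambda>x. (x,w)) ` Pw \<subseteq> cut K"
        unfolding Pu_def Pw_def cut_def using KV uw by auto
    qed
    moreover have "(\<lambda>x. (x,u)) ` Pu \<inter> (\<lambda>x. (x,w)) ` Pw = {}" using uw by auto
    ultimately show ?thesis using fins card_Un_disjoint card_image iu
      by (metis finite_imageI)
  qed
  have c2: "card (cut (K \<union> {u})) = card Pw + card Qu"
  proof -
    have "cut (K \<union> {u}) = (\<lambda>x. (x,w)) ` Pw \<union> (\<lambda>y. (u,y)) ` Qu"
    proof
      show "cut (K \<union> {u}) \<subseteq> (\<lambda>x. (x,w)) ` Pw \<union> (\<lambda>y. (u,y)) ` Qu"
      proof
        fix p assume "p \<in> cut (K \<union> {u})"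
        then obtain x y where p: "p = (x,y)" "x \<in> K \<or> x = u" "y \<in> V" "y \<notin> K" "y \<noteq> u" "E x y" unfolding cut_def by blast
        show "p \<in> (\<lambda>x. (x,w)) ` Pw \<union> (\<lambda>y. (u,y)) ` Qu"
        proof (cases "x = u")
          case True then show ?thesis using p unfolding Qu_def by auto
        next
          case False
          then have "x \<in> K" using p by auto
          then have "y = w" using cl p by blast
          then show ?thesis using p \<open>x \<in> K\<close> unfolding Pw_def by auto
        qed
      qed
      show "(\<lambda>x. (x,w)) ` Pw \<union> (\<lambda>y. (u,y)) ` Qu \<subseteq> cut (K \<union> {u})"
        unfolding Pw_def Qu_def cut_def using KV uw irr nwu by auto
    qed
    moreover have "(\<lambda>x. (x,w)) ` Pw \<inter> (\<lambda>y. (u,y)) ` Qu = {}" using KV unfolding Pw_def by auto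
    ultimately show ?thesis using fins card_Un_disjoint card_image iu
      by (metis finite_imageI)
  qed
  have c3: "card (cut (K \<union> {w})) = card Pu + card Qw"
  proof -
    have "cut (K \<union> {w}) = (\<lambda>x. (x,u)) ` Pu \<union> (\<lambda>y. (w,y)) ` Qw"
    proof
      show "cut (K \<union> {w}) \<subseteq> (\<lambda>x. (x,u)) ` Pu \<union> (\<lambda>y. (w,y)) ` Qw"
      proof
        fix p assume "p \<in> cut (K \<union> {w})"
        then obtain x y where p: "p = (x,y)" "x \<in> K \<or> x = w" "y \<in> V" "y \<notin> K" "y \<noteq> w" "E x y" unfolding cut_def by blast
        show "p \<in> (\<lambda>x. (x,u)) ` Pu \<union> (\<lambda>y. (w,y)) ` Qw"
        proof (cases "x = w")
          case True then show ?thesis using p unfolding Qw_def by auto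
        next
          case False
          then have "x \<in> K" using p by auto
          then have "y = u" using cl p by blast
          then show ?thesis using p \<open>x \<in> K\<close> unfolding Pu_def by auto
        qed
      qed
      show "(\<lambda>x. (x,u)) ` Pu \<union> (\<lambda>y. (w,y)) ` Qw \<subseteq> cut (K \<union> {w})"
        unfolding Pu_def Qw_def cut_def using KV uw irr nwu by auto
    qed
    moreover have "(\<lambda>x. (x,u)) ` Pu \<inter> (\<lambda>y. (w,y)) ` Qw = {}" using KV unfolding Pu_def by auto
    ultimately show ?thesis using fins card_Un_disjoint card_image iu
      by (metis finite_imageI)
  qed
  have c4: "card (cut (K \<union> {u,w})) = card Qu + card Qw"
  proof -
    have "cut (K \<union> {u,w}) = (\<lambda>y. (u,y)) ` Qu \<union> (\<lambda>y. (w,y)) ` Qw"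
    proof
      show "cut (K \<union> {u,w}) \<subseteq> (\<lambda>y. (u,y)) ` Qu \<union> (\<lambda>y. (w,y)) ` Qw"
      proof
        fix p assume "p \<in> cut (K \<union> {u,w})"
        then obtain x y where p: "p = (x,y)" "x \<in> K \<or> x = u \<or> x = w" "y \<in> V" "y \<notin> K" "y \<noteq> u" "y \<noteq> w" "E x y"
          unfolding cut_def by blast
        have "x \<notin> K" using cl p by blast
        then show "p \<in> (\<lambda>y. (u,y)) ` Qu \<union> (\<lambda>y. (w,y)) ` Qw" using p unfolding Qu_def Qw_def by auto
      qed
      show "(\<lambda>y. (u,y)) ` Qu \<union> (\<lambda>y. (w,y)) ` Qw \<subseteq> cut (K \<union> {u,w})"
        unfolding Qu_def Qw_def cut_def using KV uw irr nwu by auto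
    qed
    moreover have "(\<lambda>y. (u,y)) ` Qu \<inter> (\<lambda>y. (w,y)) ` Qw = {}" using uw by auto
    ultimately show ?thesis using fins card_Un_disjoint card_image iu
      by (metis finite_imageI)
  qed
  have ne: "K \<union> {u} \<noteq> V" "K \<union> {w} \<noteq> V" "K \<union> {u,w} \<noteq> V" "K \<noteq> V"
    using vK vuw v(1) by auto
  have sb: "K \<union> {u} \<subseteq> V" "K \<union> {w} \<subseteq> V" "K \<union> {u,w} \<subseteq> V"
    using KV uw by auto
  have n1: "3 \<le> card (cut K)" by (rule nc[rule_format, OF KV(1) K(2) ne(4)])
  have n2: "3 \<le> card (cut (K \<union> {u}))" by (rule nc[rule_format, OF sb(1) _ ne(1)]) simp
  have n3: "3 \<le> card (cut (K \<union> {w}))" by (rule nc[rule_format, OF sb(2) _ ne(2)]) simp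
  have n4: "3 \<le> card (cut (K \<union> {u,w}))" by (rule nc[rule_format, OF sb(3) _ ne(3)]) simp
  show False using n1 n2 n3 n4 c1 c2 c3 c4 su sw by presburger
qed

end


context cg begin

lemma main_col:
  assumes "6 \<le> card V"
  shows "\<exists>c::'a\<Rightarrow>nat. (\<forall>x\<in>V. c x < 3) \<and> (\<forall>x\<in>V. \<forall>y\<in>V. E x y \<longrightarrow> c x \<noteq> c y)"
proof (cases "\<exists>A. A \<subseteq> V \<and> A \<noteq> {} \<and> A \<noteq> V \<and> card (cut A) \<le> 2")
  case True
  then obtain A where A: "A \<subseteq> V" "A \<noteq> {}" "A \<noteq> V" "card (cut A) \<le> 2" by blast
  show ?thesis by (rule two_cut[OF A])
next
  case False
  have nc: "\<forall>A. A \<subseteq> V \<longrightarrow> A \<noteq> {} \<longrightarrow> A \<noteq> V \<longrightarrow> 3 \<le> card (cut A)"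
  proof (intro allI impI)
    fix A assume "A \<subseteq> V" "A \<noteq> {}" "A \<noteq> V"
    then have "\<not> card (cut A) \<le> 2" using False by blast
    then show "3 \<le> card (cut A)" by simp
  qed
  obtain v u w where vuw: "v \<in> V" "E v u" "E v w" "u \<noteq> w" "\<not> E u w"
    using exists_P3[OF assms] by blast
  have s: "\<And>x y. E x y \<Longrightarrow> E y x" using sym by blast
  have uV: "u \<in> V" "w \<in> V" using vuw inV by auto
  define U where "U = V - {u,w}"
  define L where "L = (\<lambda>x. if E x u \<or> E x w then {1,2} else {0,1,2::nat})"
  have finU: "finite U" unfolding U_def using fin by auto
  have ex: "\<exists>c::'a\<Rightarrow>nat. (\<forall>x\<in>U. c x \<in> L x) \<and> (\<forall>x\<in>U. \<forall>y\<in>U. E x y \<longrightarrow> c x \<noteq> c y)"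
  proof (rule list_col)
    show "finite U" by (rule finU)
    show "\<forall>x y. E x y \<longrightarrow> E y x" using sym .
    show "\<forall>x. \<not> E x x" using irr .
    show "\<forall>x. finite (L x)" unfolding L_def by auto
    show "\<forall>x\<in>U. card {y\<in>U. E x y} \<le> card (L x)"
    proof
      fix x assume xU: "x \<in> U"
      then have xV: "x \<in> V" unfolding U_def by auto
      have sub: "{y\<in>U. E x y} \<subseteq> {y\<in>V. E x y}" unfolding U_def by auto
      have le3: "card {y\<in>U. E x y} \<le> 3" using card_mono[OF nbfin sub] deg3[OF xV] by simp
      show "card {y\<in>U. E x y} \<le> card (L x)"
      proof (cases "E x u \<or> E x w")
        case True
        then have "{y\<in>U. E x y} \<subset> {y\<in>V. E x y}" using sub uV unfolding U_def by auto
        then have "card {y\<in>U. E x y} < 3" using psubset_card_mono[OF nbfin] deg3[OF xV] by metis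
        then show ?thesis using True unfolding L_def by simp
      next
        case False
        then show ?thesis using le3 unfolding L_def by simp
      qed
    qed
    show "\<forall>K\<subseteq>U. K \<noteq> {} \<longrightarrow> (\<forall>x\<in>K. \<forall>y\<in>U. E x y \<longrightarrow> y \<in> K) \<longrightarrow> (\<exists>x\<in>K. card {y\<in>U. E x y} < card (L x))"
    proof (intro allI impI)
      fix K assume K: "K \<subseteq> U" "K \<noteq> {}" "\<forall>x\<in>K. \<forall>y\<in>U. E x y \<longrightarrow> y \<in> K"
      show "\<exists>x\<in>K. card {y\<in>U. E x y} < card (L x)"
      proof (cases "\<exists>z\<in>K. E z u \<and> E z w")
        case True
        then obtain z where z: "z \<in> K" "E z u" "E z w" by blast
        then have zV: "z \<in> V" using K unfolding U_def by auto
        have sub: "{y\<in>U. E z y} \<subseteq> {y\<in>V. E z y} - {u,w}" unfolding U_def by auto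
        have uwsub: "{u,w} \<subseteq> {y\<in>V. E z y}" using z uV by auto
        have c2: "card {u,w} = 2" using vuw(4) by simp
        have "card ({y\<in>V. E z y} - {u,w}) = card {y\<in>V. E z y} - card {u,w}"
          by (rule card_Diff_subset[OF _ uwsub]) simp
        then have c1: "card ({y\<in>V. E z y} - {u,w}) = 1" using deg3[OF zV] c2 by simp
        have fd: "finite ({y\<in>V. E z y} - {u,w})" using nbfin by simp
        have "card {y\<in>U. E z y} \<le> card ({y\<in>V. E z y} - {u,w})" by (rule card_mono[OF fd sub])
        moreover have "card (L z) = 2" using z unfolding L_def by simp
        ultimately have "card {y\<in>U. E z y} < card (L z)" using c1 by simp
        then show ?thesis using z(1) by blast
      next
        case False
        have "K \<subseteq> V - {u,w}" using K unfolding U_def by auto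
        moreover have "\<forall>x\<in>K. \<forall>y\<in>V - {u,w}. E x y \<longrightarrow> y \<in> K" using K(3) unfolding U_def .
        ultimately have False
          by (rule cut_contra[OF vuw(4,5) uV vuw(1,2,3) _ K(2) _ False nc])
        then show ?thesis by blast
      qed
    qed
  qed
  then obtain c :: "'a \<Rightarrow> nat" where c: "\<forall>x\<in>U. c x \<in> L x" "\<forall>x\<in>U. \<forall>y\<in>U. E x y \<longrightarrow> c x \<noteq> c y"
    by blast
  define c' where "c' = (\<lambda>x. if x \<in> U then c x else 0)"
  have "\<forall>x\<in>V. c' x < 3"
  proof
    fix x assume "x \<in> V"
    show "c' x < 3"
    proof (cases "x \<in> U")
      case True
      then have "c x \<in> L x" using c by blast
      then show ?thesis using True unfolding c'_def L_def by (auto split: if_splits)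
    next
      case False then show ?thesis unfolding c'_def by simp
    qed
  qed
  moreover have "\<forall>x\<in>V. \<forall>y\<in>V. E x y \<longrightarrow> c' x \<noteq> c' y"
  proof (intro ballI impI)
    fix x y assume xy: "x \<in> V" "y \<in> V" "E x y"
    have nz: "\<And>a b. a \<in> U \<Longrightarrow> b \<notin> U \<Longrightarrow> b \<in> V \<Longrightarrow> E a b \<Longrightarrow> c a \<noteq> 0"
    proof -
      fix a b assume ab: "a \<in> U" "b \<notin> U" "b \<in> V" "E a b"
      then have "b = u \<or> b = w" unfolding U_def by auto
      then have "E a u \<or> E a w" using ab by auto
      then have "L a = {1,2}" unfolding L_def by simp
      moreover have "c a \<in> L a" using c(1) ab(1) by blast
      ultimately show "c a \<noteq> 0" by auto
    qed
    show "c' x \<noteq> c' y"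
    proof (cases "x \<in> U")
      case True
      show ?thesis
      proof (cases "y \<in> U")
        case True then show ?thesis using \<open>x \<in> U\<close> c(2) xy unfolding c'_def by auto
      next
        case False then show ?thesis using \<open>x \<in> U\<close> nz xy unfolding c'_def by auto
      qed
    next
      case False
      show ?thesis
      proof (cases "y \<in> U")
        case True
        have "c y \<noteq> 0" using nz[OF True False xy(1) s[OF xy(3)]] .
        then show ?thesis using True False unfolding c'_def by auto
      next
        case False
        have "x = u \<or> x = w" "y = u \<or> y = w" using \<open>x \<notin> U\<close> False xy unfolding U_def by auto
        then have False using xy(3) vuw(5) irr s by blast
        then show ?thesis by blast
      qed
    qed
  qed
  ultimately show ?thesis by blast
qed

end


lemma indep_fin:
  assumes "simple_graph V E"
  shows "finite {S. independent_set V E S}"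
proof -
  have "{S. independent_set V E S} \<subseteq> Pow V" unfolding independent_set_def by auto
  moreover have "finite V" using assms unfolding simple_graph_def by auto
  ultimately show ?thesis using finite_subset by blast
qed

lemma alpha_ge:
  assumes "simple_graph V E" "independent_set V E S"
  shows "card S \<le> independence_number V E"
  unfolding independence_number_def
  using assms indep_fin[OF assms(1)] by (intro Max_ge) auto

lemma alpha_ex:
  assumes "simple_graph V E"
  shows "\<exists>S. independent_set V E S \<and> card S = independence_number V E"
proof -
  have "{} \<in> {S. independent_set V E S}" unfolding independent_set_def by auto
  then have "independence_number V E \<in> card ` {S. independent_set V E S}"
    unfolding independence_number_def using indep_fin[OF assms] by (intro Max_in) auto
  then show ?thesis by auto
qed

lemma diss_ex:
  assumes "simple_graph V E"
  shows "\<exists>D. dissociation_set V E D \<and> card D = dissociation_number V E"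
proof -
  have fin: "finite {D. dissociation_set V E D}"
  proof -
    have "{D. dissociation_set V E D} \<subseteq> Pow V" unfolding dissociation_set_def by auto
    moreover have "finite V" using assms unfolding simple_graph_def by auto
    ultimately show ?thesis using finite_subset by blast
  qed
  have "{} \<in> {D. dissociation_set V E D}" unfolding dissociation_set_def by auto
  then have "dissociation_number V E \<in> card ` {D. dissociation_set V E D}"
    unfolding dissociation_number_def using fin by (intro Max_in) auto
  then show ?thesis by auto
qed

lemma col_alpha:
  assumes sg: "simple_graph V E" and c: "\<forall>x\<in>V. c x < (3::nat)" "\<forall>x\<in>V. \<forall>y\<in>V. E x y \<longrightarrow> c x \<noteq> c y"
  shows "card V \<le> 3 * independence_number V E"
proof -
  define C where "C = (\<lambda>i. {x\<in>V. c x = i})"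
  have ind: "independent_set V E (C i)" for i
    unfolding independent_set_def C_def
  proof (intro conjI ballI)
    fix x y assume "x \<in> {x \<in> V. c x = i}" "y \<in> {x \<in> V. c x = i}"
    then have "x \<in> V" "y \<in> V" "c x = c y" by auto
    then show "\<not> E x y" using c(2) by blast
  qed auto
  have "V = C 0 \<union> C 1 \<union> C 2"
  proof
    show "V \<subseteq> C 0 \<union> C 1 \<union> C 2"
    proof
      fix x assume "x \<in> V"
      then have "c x < 3" using c(1) by blast
      then have "c x = 0 \<or> c x = 1 \<or> c x = 2" by auto
      then show "x \<in> C 0 \<union> C 1 \<union> C 2" using \<open>x \<in> V\<close> unfolding C_def by auto
    qed
    show "C 0 \<union> C 1 \<union> C 2 \<subseteq> V" unfolding C_def by auto
  qed
  then have "card V \<le> card (C 0) + card (C 1) + card (C 2)"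
    by (metis card_Un_le add_le_mono1 order_trans)
  moreover have ci: "card (C i) \<le> independence_number V E" for i
    using alpha_ge[OF sg ind] .
  ultimately show ?thesis
    using ci[of 0] ci[of 1] ci[of 2] by linarith
qed



context cg begin

lemma B_ineq:
  assumes S: "independent_set V E S" "card S = independence_number V E"
    and Smax: "\<forall>S'. independent_set V E S' \<and> card S' = independence_number V E \<longrightarrow> card (S' - D) \<le> card (S - D)"
    and D: "dissociation_set V E D"
  shows "3 * card D \<le> 2 * card S + card V"
proof -
  have s: "\<And>x y. E x y \<Longrightarrow> E y x" using sym by blast
  have SV: "S \<subseteq> V" using S unfolding independent_set_def by auto
  have Sind: "\<And>x y. x \<in> S \<Longrightarrow> y \<in> S \<Longrightarrow> \<not> E x y" using S unfolding independent_set_def by auto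
  have DV: "D \<subseteq> V" using D unfolding dissociation_set_def by auto
  have Dd: "\<And>x. x \<in> D \<Longrightarrow> card {u\<in>D. E x u} \<le> 1" using D unfolding dissociation_set_def by auto
  define X where "X = D - S"
  define R where "R = V - D"
  define SR where "SR = S - D"
  define RS where "RS = V - D - S"
  have finV: "finite V" by (rule fin)
  have fDS: "finite D" "finite S" using finV DV SV finite_subset by auto
  have fins: "finite X" "finite R" "finite SR" "finite RS" "finite D" "finite S"
    unfolding X_def R_def SR_def RS_def using fDS finV by simp_all
  have f1: "2 \<le> card {y\<in>R. E x y}" if x: "x \<in> X" for x
  proof -
    have xV: "x \<in> V" "x \<in> D" using x DV unfolding X_def by auto
    have "{y\<in>V. E x y} \<subseteq> {y\<in>D. E x y} \<union> {y\<in>R. E x y}" unfolding R_def by auto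
    then have "card {y\<in>V. E x y} \<le> card ({y\<in>D. E x y} \<union> {y\<in>R. E x y})"
      using fins by (intro card_mono) auto
    also have "\<dots> \<le> card {y\<in>D. E x y} + card {y\<in>R. E x y}" by (rule card_Un_le)
    finally show ?thesis using deg3[OF xV(1)] Dd[OF xV(2)] by linarith
  qed
  have f2: "2 * card X \<le> (\<Sum>x\<in>X. card {y\<in>R. E x y})"
  proof -
    have "(\<Sum>x\<in>X. 2) \<le> (\<Sum>x\<in>X. card {y\<in>R. E x y})" using f1 by (intro sum_mono) auto
    then show ?thesis by simp
  qed
  have f3: "(\<Sum>x\<in>X. card {y\<in>R. E x y}) = (\<Sum>r\<in>R. card {x\<in>X. E r x})"
    by (rule dc[OF fins(1,2) sym])
  have RU: "R = SR \<union> RS" "SR \<inter> RS = {}" unfolding R_def SR_def RS_def using SV by auto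
  have f4: "(\<Sum>r\<in>R. card {x\<in>X. E r x}) = (\<Sum>r\<in>SR. card {x\<in>X. E r x}) + (\<Sum>r\<in>RS. card {x\<in>X. E r x})"
    unfolding RU(1) by (rule sum.union_disjoint[OF fins(3,4) RU(2)])
  have f5: "card {x\<in>X. E r x} + card {y\<in>RS. E r y} \<le> 3" if r: "r \<in> SR" for r
  proof -
    have rV: "r \<in> V" using r SV unfolding SR_def by auto
    have "{x\<in>X. E r x} \<union> {y\<in>RS. E r y} \<subseteq> {y\<in>V. E r y}" unfolding X_def RS_def using DV by auto
    moreover have "{x\<in>X. E r x} \<inter> {y\<in>RS. E r y} = {}" unfolding X_def RS_def by auto
    ultimately have "card {x\<in>X. E r x} + card {y\<in>RS. E r y} \<le> card {y\<in>V. E r y}"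
      using fins nbfin by (metis (no_types, lifting) card_Un_disjoint card_mono finite_Un finite_subset)
    then show ?thesis using deg3[OF rV] by simp
  qed
  have f6: "card {x\<in>X. E r x} \<le> 1 + card {y\<in>SR. E r y}" if r: "r \<in> RS" for r
  proof -
    have rV: "r \<in> V" "r \<notin> D" "r \<notin> S" using r unfolding RS_def by auto
    have "\<exists>y\<in>S. E r y"
    proof (rule ccontr)
      assume "\<not> (\<exists>y\<in>S. E r y)"
      then have "independent_set V E (insert r S)"
        using S(1) rV s unfolding independent_set_def by (auto simp: irr)
      then have "card (insert r S) \<le> independence_number V E" by (rule alpha_ge[OF sg])
      moreover have "card (insert r S) = card S + 1" using fins rV by simp
      ultimately show False using S(2) by simp
    qed
    then obtain y where y: "y \<in> S" "E r y" by blast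
    have yX: "y \<notin> X" using y unfolding X_def by auto
    have sub: "insert y {x\<in>X. E r x} \<subseteq> {z\<in>V. E r z}" using y inV unfolding X_def using DV by auto
    have "card (insert y {x\<in>X. E r x}) \<le> 3" using card_mono[OF nbfin sub] deg3[OF rV(1)] by simp
    then have le2: "card {x\<in>X. E r x} \<le> 2" using yX fins by simp
    show ?thesis
    proof (cases "y \<in> D")
      case False
      then have "y \<in> {y\<in>SR. E r y}" using y unfolding SR_def by auto
      then have "1 \<le> card {y\<in>SR. E r y}" using fins by (metis (no_types, lifting) One_nat_def Suc_leI card_gt_0_iff empty_iff finite_subset mem_Collect_eq subsetI)
      then show ?thesis using le2 by simp
    next
      case True
      show ?thesis
      proof (rule ccontr)
        assume "\<not> ?thesis"
        then have "2 \<le> card {x\<in>X. E r x}" by simp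
        then have "3 \<le> card (insert y {x\<in>X. E r x})" using yX fins by simp
        then have nbr: "{z\<in>V. E r z} = insert y {x\<in>X. E r x}" by (rule nb_eq[OF rV(1) sub])
        have only: "\<And>z. z \<in> S \<Longrightarrow> E r z \<Longrightarrow> z = y"
        proof -
          fix z assume "z \<in> S" "E r z"
          then have "z \<in> {z\<in>V. E r z}" using inV by auto
          then have "z \<in> insert y {x\<in>X. E r x}" using nbr by simp
          then show "z = y" using \<open>z \<in> S\<close> unfolding X_def by auto
        qed
        define S' where "S' = insert r (S - {y})"
        have "independent_set V E S'"
          unfolding independent_set_def S'_def
        proof (intro conjI ballI)
          show "insert r (S - {y}) \<subseteq> V" using SV rV by auto
          fix a b assume ab: "a \<in> insert r (S - {y})" "b \<in> insert r (S - {y})"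
          show "\<not> E a b"
          proof (cases "a = r")
            case True
            show ?thesis
            proof (cases "b = r")
              case True then show ?thesis using \<open>a = r\<close> irr by auto
            next
              case False
              then have "b \<in> S" "b \<noteq> y" using ab by auto
              then show ?thesis using only \<open>a = r\<close> by blast
            qed
          next
            case False
            then have aS: "a \<in> S" "a \<noteq> y" using ab by auto
            show ?thesis
            proof (cases "b = r")
              case True then show ?thesis using only aS s by blast
            next
              case False
              then have "b \<in> S" using ab by auto
              then show ?thesis using aS Sind by blast
            qed
          qed
        qed
        moreover have "card S' = card S"
        proof -
          have "0 < card S" using fins(6) y(1) card_gt_0_iff by blast
          then show ?thesis unfolding S'_def using fins y rV by (simp add: card.insert_remove)
        qed
        ultimately have "card (S' - D) \<le> card (S - D)" using Smax S(2) by auto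
        moreover have "S' - D = insert r (S - D)" unfolding S'_def using True rV by auto
        moreover have "card (insert r (S - D)) = card (S - D) + 1" using fins rV by simp
        ultimately show False by simp
      qed
    qed
  qed
  have f7: "(\<Sum>r\<in>RS. card {y\<in>SR. E r y}) = (\<Sum>r\<in>SR. card {y\<in>RS. E r y})"
    by (rule dc[OF fins(4,3) sym])
  have g1: "(\<Sum>r\<in>SR. card {x\<in>X. E r x}) + (\<Sum>r\<in>SR. card {y\<in>RS. E r y}) \<le> 3 * card SR"
  proof -
    have "(\<Sum>r\<in>SR. card {x\<in>X. E r x} + card {y\<in>RS. E r y}) \<le> (\<Sum>r\<in>SR. 3)"
      using f5 by (intro sum_mono) auto
    then show ?thesis by (simp add: sum.distrib)
  qed
  have g2: "(\<Sum>r\<in>RS. card {x\<in>X. E r x}) \<le> card RS + (\<Sum>r\<in>RS. card {y\<in>SR. E r y})"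
  proof -
    have "(\<Sum>r\<in>RS. card {x\<in>X. E r x}) \<le> (\<Sum>r\<in>RS. 1 + card {y\<in>SR. E r y})"
      using f6 by (intro sum_mono) auto
    then show ?thesis by (simp add: sum_Suc)
  qed
  have key: "2 * card X \<le> 3 * card SR + card RS" using f2 f3 f4 f7 g1 g2 by linarith
  have cD: "card D = card (D \<inter> S) + card X"
    unfolding X_def using fins card_Int_Diff by (metis Int_commute card_Un_disjoint Diff_disjoint Int_Diff_Un Int_Diff_disjoint finite_Diff finite_Int)
  have cS: "card S = card (D \<inter> S) + card SR"
    unfolding SR_def using fins by (metis Int_commute card_Int_Diff)
  have cV: "card V = card D + card SR + card RS"
  proof -
    have "V = D \<union> (SR \<union> RS)" "D \<inter> (SR \<union> RS) = {}" using DV SV unfolding SR_def RS_def by auto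
    then have "card V = card D + card (SR \<union> RS)" using fins by (metis card_Un_disjoint finite_Un)
    moreover have "card (SR \<union> RS) = card SR + card RS" using fins RU(2) card_Un_disjoint by blast
    ultimately show ?thesis by simp
  qed
  show ?thesis using key cD cS cV by linarith
qed

end

theorem theorem1:
  fixes V :: "'a set" and E :: "'a \<Rightarrow> 'a \<Rightarrow> bool"
  assumes "simple_graph V E" and "connected_graph V E" and "cubic V E"
    and "card V \<ge> 6"
  shows "real (independence_number V E) \<ge> 3 / 5 * real (dissociation_number V E)"
proof -
  interpret cg V E using assms(1,2,3) by unfold_locales
  obtain c :: "'a \<Rightarrow> nat" where c: "\<forall>x\<in>V. c x < 3" "\<forall>x\<in>V. \<forall>y\<in>V. E x y \<longrightarrow> c x \<noteq> c y"
    using main_col[OF assms(4)] by blast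
  have A: "card V \<le> 3 * independence_number V E" by (rule col_alpha[OF assms(1) c])
  obtain D where D: "dissociation_set V E D" "card D = dissociation_number V E"
    using diss_ex[OF assms(1)] by blast
  define F where "F = {S. independent_set V E S \<and> card S = independence_number V E}"
  have finF: "finite F" unfolding F_def using indep_fin[OF assms(1)] by (rule rev_finite_subset) auto
  have neF: "F \<noteq> {}" unfolding F_def using alpha_ex[OF assms(1)] by auto
  define m where "m = Max ((\<lambda>S. card (S - D)) ` F)"
  have "m \<in> (\<lambda>S. card (S - D)) ` F" unfolding m_def using finF neF by (intro Max_in) auto
  then obtain S where S: "S \<in> F" "card (S - D) = m" by auto
  have Smax: "\<forall>S'. independent_set V E S' \<and> card S' = independence_number V E \<longrightarrow> card (S' - D) \<le> card (S - D)"
  proof (intro allI impI)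
    fix S' assume "independent_set V E S' \<and> card S' = independence_number V E"
    then have "S' \<in> F" unfolding F_def by auto
    then show "card (S' - D) \<le> card (S - D)" unfolding S(2) m_def using finF by (intro Max_ge) auto
  qed
  have SS: "independent_set V E S" "card S = independence_number V E" using S(1) unfolding F_def by auto
  have B: "3 * card D \<le> 2 * card S + card V" by (rule B_ineq[OF SS Smax D(1)])
  have "5 * independence_number V E \<ge> 3 * dissociation_number V E" using A B SS(2) D(2) by linarith
  then have "real (5 * independence_number V E) \<ge> real (3 * dissociation_number V E)" by linarith
  then show ?thesis by simp
qed


end
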